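(* Every $G$-invariant proper ideal of $\mathcal{A}(D)$ is contained in $\mathcal{V}(D)$.
   Context: Let $G$ be a group generated by a conjugacy class $D$ of involutions such that for all $d,e\in D$ the order of $de$ is $1$, $2$ or $3$. Lines of the Fischer space on $D$ are triples $\{d,e,d^e\}$ with $d,e\in D$ non-commuting. $\mathcal{A}(D)$ is the $\mathbb{F}_2$-vector space with basis $D$ (finite subsets of $D$ under symmetric difference), with bilinear product determined by $d*e=d+e+f$ if $\{d,e,f\}$ is a line and $d*e=0$ otherwise. $G$ acts on $\mathcal{A}(D)$ by linearly extending conjugation on $D$. The bilinear form $\langle\cdot,\cdot\rangle$ is determined by $\langle d,e\rangle=1$ if $d,e$ do not commute and $0$ otherwise; $\mathcal{V}(D)$ is its radical. *)

theory Defs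
  imports "HOL-Algebra.Algebra"
begin

text \<open>Elements of the F_2-vector space A(D): finite subsets of D (addition = symmetric difference).\<close>
definition algA :: "'a set \<Rightarrow> 'a set set" where
  "algA D = {a. a \<subseteq> D \<and> finite a}"

definition conjg :: "('a, 'b) monoid_scheme \<Rightarrow> 'a \<Rightarrow> 'a \<Rightarrow> 'a" where
  "conjg G d e = inv\<^bsub>G\<^esub> e \<otimes>\<^bsub>G\<^esub> d \<otimes>\<^bsub>G\<^esub> e"

definition commute :: "('a, 'b) monoid_scheme \<Rightarrow> 'a \<Rightarrow> 'a \<Rightarrow> bool" where
  "commute G d e \<longleftrightarrow> d \<otimes>\<^bsub>G\<^esub> e = e \<otimes>\<^bsub>G\<^esub> d"

definition basis_prod :: "('a, 'b) monoid_scheme \<Rightarrow> 'a \<Rightarrow> 'a \<Rightarrow> 'a set" where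
  "basis_prod G d e = (if commute G d e then {} else {d, e, conjg G d e})"

text \<open>Bilinear extension over F_2: coefficient of x is the parity of the number of contributing pairs.\<close>
definition algmult :: "('a, 'b) monoid_scheme \<Rightarrow> 'a set \<Rightarrow> 'a set \<Rightarrow> 'a set" where
  "algmult G a b = {x. odd (card {(d, e). d \<in> a \<and> e \<in> b \<and> x \<in> basis_prod G d e})}"

text \<open>Bilinear form over F_2 (True = 1, False = 0).\<close>
definition algform :: "('a, 'b) monoid_scheme \<Rightarrow> 'a set \<Rightarrow> 'a set \<Rightarrow> bool" where
  "algform G a b = odd (card {(d, e). d \<in> a \<and> e \<in> b \<and> \<not> commute G d e})"

definition radV :: "('a, 'b) monoid_scheme \<Rightarrow> 'a set \<Rightarrow> 'a set set" where
  "radV G D = {a \<in> algA D. \<forall>b \<in> algA D. \<not> algform G a b}"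

definition gact :: "('a, 'b) monoid_scheme \<Rightarrow> 'a \<Rightarrow> 'a set \<Rightarrow> 'a set" where
  "gact G g a = (\<lambda>d. g \<otimes>\<^bsub>G\<^esub> d \<otimes>\<^bsub>G\<^esub> inv\<^bsub>G\<^esub> g) ` a"

text \<open>Ideal of A(D): subspace (over F_2: contains 0, closed under +) absorbing products.\<close>
definition alg_ideal :: "('a, 'b) monoid_scheme \<Rightarrow> 'a set \<Rightarrow> 'a set set \<Rightarrow> bool" where
  "alg_ideal G D I \<longleftrightarrow> I \<subseteq> algA D \<and> {} \<in> I \<and> (\<forall>x\<in>I. \<forall>y\<in>I. (x - y) \<union> (y - x) \<in> I)
     \<and> (\<forall>a\<in>algA D. \<forall>x\<in>I. algmult G a x \<in> I \<and> algmult G x a \<in> I)"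

definition G_invariant :: "('a, 'b) monoid_scheme \<Rightarrow> 'a set set \<Rightarrow> bool" where
  "G_invariant G I \<longleftrightarrow> (\<forall>g\<in>carrier G. \<forall>x\<in>I. gact G g x \<in> I)"

definition fischer_setup :: "('a, 'b) monoid_scheme \<Rightarrow> 'a set \<Rightarrow> bool" where
  "fischer_setup G D \<longleftrightarrow> group G \<and>
     (\<exists>x\<in>carrier G. x \<noteq> \<one>\<^bsub>G\<^esub> \<and> x \<otimes>\<^bsub>G\<^esub> x = \<one>\<^bsub>G\<^esub> \<and>
        D = {g \<otimes>\<^bsub>G\<^esub> x \<otimes>\<^bsub>G\<^esub> inv\<^bsub>G\<^esub> g | g. g \<in> carrier G}) \<and>
     generate G D = carrier G \<and>
     (\<forall>d\<in>D. \<forall>e\<in>D. group.ord G (d \<otimes>\<^bsub>G\<^esub> e) \<in> {1, 2, 3})"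

end

theory Submission
  imports Defs
begin

definition sd :: "'x set \<Rightarrow> 'x set \<Rightarrow> 'x set" where
  "sd x y = (x - y) \<union> (y - x)"

lemma card_split_pairs:
  assumes "finite a" "finite c" "z \<notin> a"
  shows "card {(d, e). d \<in> insert z a \<and> e \<in> c \<and> P d e} =
         card {(d, e). d \<in> {z} \<and> e \<in> c \<and> P d e} + card {(d, e). d \<in> a \<and> e \<in> c \<and> P d e}"
proof -
  have eq: "{(d, e). d \<in> insert z a \<and> e \<in> c \<and> P d e} =
         {(d, e). d \<in> {z} \<and> e \<in> c \<and> P d e} \<union> {(d, e). d \<in> a \<and> e \<in> c \<and> P d e}" by auto
  have f1: "finite {(d, e). d \<in> {z} \<and> e \<in> c \<and> P d e}"
    by (rule finite_subset[of _ "{z} \<times> c"]) (use assms in auto)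
  have f2: "finite {(d, e). d \<in> a \<and> e \<in> c \<and> P d e}"
    by (rule finite_subset[of _ "a \<times> c"]) (use assms in auto)
  show ?thesis unfolding eq
    by (rule card_Un_disjoint[OF f1 f2]) (use assms in auto)
qed

lemma algmult_insert:
  assumes "finite a" "finite c" "z \<notin> a"
  shows "algmult G (insert z a) c = sd (algmult G {z} c) (algmult G a c)"
  unfolding algmult_def sd_def
  using card_split_pairs[OF assms, of "\<lambda>d e. _ \<in> basis_prod G d e"] by auto

lemma algform_insert:
  assumes "finite a" "finite c" "z \<notin> a"
  shows "algform G (insert z a) c = (algform G {z} c \<noteq> algform G a c)"
  unfolding algform_def
  using card_split_pairs[OF assms, of "\<lambda>d e. \<not> commute G d e"] by auto

lemma singleton_pairs:
  "{(d, x). d \<in> {z} \<and> x \<in> {e} \<and> P d x} = (if P z e then {(z, e)} else {})"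
  by auto

lemma base:
  fixes G (structure)
  assumes G: "group G" and z: "z \<in> carrier G" and e: "e \<in> carrier G" and ee: "e \<otimes>\<^bsub>G\<^esub> e = \<one>\<^bsub>G\<^esub>"
  shows "algmult G {z} {e} = sd (sd {z} {e \<otimes>\<^bsub>G\<^esub> z \<otimes>\<^bsub>G\<^esub> inv\<^bsub>G\<^esub> e})
            (if algform G {z} {e} then {e} else {})"
proof -
  interpret group G by (rule G)
  have ie: "inv e = e" using ee e by (simp add: inv_equality)
  have af: "algform G {z} {e} = (\<not> commute G z e)"
    unfolding algform_def singleton_pairs by auto
  have am: "algmult G {z} {e} = basis_prod G z e"
    unfolding algmult_def singleton_pairs by auto
  show ?thesis
  proof (cases "commute G z e")
    case True
    have "e \<otimes> z \<otimes> inv e = z \<otimes> e \<otimes> e"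
      using True unfolding commute_def ie by simp
    also have "\<dots> = z" using z e ee by (simp add: m_assoc)
    finally have "e \<otimes> z \<otimes> inv e = z" .
    then show ?thesis using True af am unfolding basis_prod_def sd_def by auto
  next
    case False
    have c: "conjg G z e = e \<otimes> z \<otimes> inv e" unfolding conjg_def ie ..
    have n1: "z \<noteq> e" using False unfolding commute_def by auto
    have n2: "e \<noteq> e \<otimes> z \<otimes> e"
    proof
      assume h: "e = e \<otimes> z \<otimes> e"
      hence "e \<otimes> e = e \<otimes> (e \<otimes> z \<otimes> e)" by simp
      hence "\<one> = z \<otimes> e" using ee z e by (simp add: m_assoc[symmetric])
      hence "z = inv e" using z e by (simp add: inv_equality)
      hence "z = e" using ie by simp
      thus False using n1 by simp
    qed
    have n3: "z \<noteq> e \<otimes> z \<otimes> e"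
    proof
      assume h: "z = e \<otimes> z \<otimes> e"
      hence "e \<otimes> z = e \<otimes> (e \<otimes> z \<otimes> e)" by simp
      hence "e \<otimes> z = z \<otimes> e" using ee z e by (simp add: m_assoc[symmetric])
      thus False using False unfolding commute_def by simp
    qed
    show ?thesis using False af am n1 n2 n3 unfolding basis_prod_def sd_def c ie by auto
  qed
qed


lemma key:
  fixes G (structure)
  assumes G: "group G" and e: "e \<in> carrier G" and ee: "e \<otimes> e = \<one>"
    and fa: "finite a" and ac: "a \<subseteq> carrier G"
  shows "algmult G a {e} = sd (sd a (gact G e a)) (if algform G a {e} then {e} else {})"
  using fa ac
proof (induction a rule: finite_induct)
  case empty
  then show ?case unfolding algmult_def algform_def gact_def sd_def by simp
next
  case (insert z a)
  interpret group G by (rule G)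
  have z: "z \<in> carrier G" using insert by auto
  have IH: "algmult G a {e} = sd (sd a (gact G e a)) (if algform G a {e} then {e} else {})"
    using insert by auto
  have gi: "gact G e (insert z a) = insert (e \<otimes> z \<otimes> inv e) (gact G e a)"
    unfolding gact_def by simp
  have nz: "e \<otimes> z \<otimes> inv e \<notin> gact G e a"
  proof
    assume "e \<otimes> z \<otimes> inv e \<in> gact G e a"
    then obtain y where y: "y \<in> a" "e \<otimes> z \<otimes> inv e = e \<otimes> y \<otimes> inv e"
      unfolding gact_def by auto
    have yc: "y \<in> carrier G" using y insert by auto
    have "z = y" using y(2) z yc e by simp
    thus False using y insert by auto
  qed
  have m: "algmult G (insert z a) {e} = sd (algmult G {z} {e}) (algmult G a {e})"
    by (rule algmult_insert) (use insert in auto)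
  have f: "algform G (insert z a) {e} = (algform G {z} {e} \<noteq> algform G a {e})"
    by (rule algform_insert) (use insert in auto)
  show ?case unfolding m f gi IH base[OF G z e ee] using nz insert(2)
    unfolding sd_def by (cases "algform G {z} {e}"; cases "algform G a {e}") auto
qed

lemma card_split_pairs2:
  assumes "finite a" "finite c" "z \<notin> c"
  shows "card {(d, e). d \<in> a \<and> e \<in> insert z c \<and> P d e} =
         card {(d, e). d \<in> a \<and> e \<in> {z} \<and> P d e} + card {(d, e). d \<in> a \<and> e \<in> c \<and> P d e}"
proof -
  have eq: "{(d, e). d \<in> a \<and> e \<in> insert z c \<and> P d e} =
         {(d, e). d \<in> a \<and> e \<in> {z} \<and> P d e} \<union> {(d, e). d \<in> a \<and> e \<in> c \<and> P d e}" by auto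
  have f1: "finite {(d, e). d \<in> a \<and> e \<in> {z} \<and> P d e}"
    by (rule finite_subset[of _ "a \<times> {z}"]) (use assms in auto)
  have f2: "finite {(d, e). d \<in> a \<and> e \<in> c \<and> P d e}"
    by (rule finite_subset[of _ "a \<times> c"]) (use assms in auto)
  show ?thesis unfolding eq
    by (rule card_Un_disjoint[OF f1 f2]) (use assms in auto)
qed

lemma algform_single:
  assumes "finite a" "finite b" "algform G a b"
  shows "\<exists>e\<in>b. algform G a {e}"
  using assms(2,3)
proof (induction b rule: finite_induct)
  case empty
  then show ?case unfolding algform_def by simp
next
  case (insert z c)
  have "algform G a (insert z c) = (algform G a {z} \<noteq> algform G a c)"
    unfolding algform_def
    using card_split_pairs2[OF assms(1) insert(1,2), of "\<lambda>d e. \<not> commute G d e"] by auto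
  then show ?case using insert by auto
qed

lemma conj_trans:
  fixes G (structure)
  assumes G: "group G" and g: "g \<in> carrier G" and h: "h \<in> carrier G" and x: "x \<in> carrier G"
  shows "(g \<otimes> inv h) \<otimes> (h \<otimes> x \<otimes> inv h) \<otimes> inv (g \<otimes> inv h) = g \<otimes> x \<otimes> inv g"
proof -
  interpret group G by (rule G)
  have c: "\<And>y. y \<in> carrier G \<Longrightarrow> inv h \<otimes> (h \<otimes> y) = y"
    using h by (simp add: m_assoc[symmetric])
  show ?thesis using g h x by (simp add: m_assoc inv_mult_group c)
qed


theorem proposition2p4:
  fixes G :: "('a, 'b) monoid_scheme" and D :: "'a set" and I :: "'a set set"
  assumes "fischer_setup G D"
    and "alg_ideal G D I"
    and "G_invariant G I"
    and "I \<noteq> algA D"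
  shows "I \<subseteq> radV G D"
proof
  fix a assume aI: "a \<in> I"
  from assms(1) have G: "group G" unfolding fischer_setup_def by auto
  interpret group G by (rule G)
  from assms(1) obtain x where x: "x \<in> carrier G" "x \<otimes>\<^bsub>G\<^esub> x = \<one>\<^bsub>G\<^esub>"
    and Dd: "D = {g \<otimes>\<^bsub>G\<^esub> x \<otimes>\<^bsub>G\<^esub> inv\<^bsub>G\<^esub> g | g. g \<in> carrier G}"
    unfolding fischer_setup_def by blast
  have Dc: "D \<subseteq> carrier G" using x unfolding Dd by auto
  have Dinv: "d \<otimes>\<^bsub>G\<^esub> d = \<one>\<^bsub>G\<^esub>" if "d \<in> D" for d
  proof -
    have "d \<in> {g \<otimes>\<^bsub>G\<^esub> x \<otimes>\<^bsub>G\<^esub> inv\<^bsub>G\<^esub> g | g. g \<in> carrier G}" using that Dd by simp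
    then obtain g where g: "g \<in> carrier G" "d = g \<otimes>\<^bsub>G\<^esub> x \<otimes>\<^bsub>G\<^esub> inv\<^bsub>G\<^esub> g" by blast
    have c: "inv\<^bsub>G\<^esub> g \<otimes>\<^bsub>G\<^esub> (g \<otimes>\<^bsub>G\<^esub> y) = y" if "y \<in> carrier G" for y
      using g that by (simp add: m_assoc[symmetric])
    have "d \<otimes>\<^bsub>G\<^esub> d = g \<otimes>\<^bsub>G\<^esub> (x \<otimes>\<^bsub>G\<^esub> (x \<otimes>\<^bsub>G\<^esub> inv\<^bsub>G\<^esub> g))"
      using g x c by (simp add: m_assoc)
    moreover have "x \<otimes>\<^bsub>G\<^esub> (x \<otimes>\<^bsub>G\<^esub> inv\<^bsub>G\<^esub> g) = inv\<^bsub>G\<^esub> g"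
      using g x by (simp add: m_assoc[symmetric])
    ultimately show ?thesis using g x by simp
  qed
  from assms(2) have IA: "I \<subseteq> algA D" and I0: "{} \<in> I"
    and Isd: "\<And>u v. u \<in> I \<Longrightarrow> v \<in> I \<Longrightarrow> sd u v \<in> I"
    and Im: "\<And>b u. b \<in> algA D \<Longrightarrow> u \<in> I \<Longrightarrow> algmult G u b \<in> I"
    unfolding alg_ideal_def sd_def by auto
  have aA: "a \<in> algA D" using aI IA by auto
  show "a \<in> radV G D"
  proof (rule ccontr)
    assume "a \<notin> radV G D"
    then obtain b where b: "b \<in> algA D" "algform G a b" using aA unfolding radV_def by auto
    then obtain e where e: "e \<in> b" "algform G a {e}"
      using algform_single[of a b G] aA unfolding algA_def by auto
    have eD: "e \<in> D" using e b unfolding algA_def by auto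
    have ec: "e \<in> carrier G" using eD Dc by auto
    have eA: "{e} \<in> algA D" using eD unfolding algA_def by auto
    have k: "algmult G a {e} = sd (sd a (gact G e a)) {e}"
      using key[OF G ec Dinv[OF eD], of a] aA Dc e(2) unfolding algA_def by auto
    have "algmult G a {e} \<in> I" using Im[OF eA aI] .
    moreover have "sd a (gact G e a) \<in> I"
      using Isd[OF aI] assms(3) aI ec unfolding G_invariant_def by auto
    ultimately have "sd (algmult G a {e}) (sd a (gact G e a)) \<in> I" using Isd by auto
    moreover have "sd (algmult G a {e}) (sd a (gact G e a)) = {e}"
      unfolding k sd_def by auto
    ultimately have eI: "{e} \<in> I" by simp
    have "e \<in> {g \<otimes>\<^bsub>G\<^esub> x \<otimes>\<^bsub>G\<^esub> inv\<^bsub>G\<^esub> g | g. g \<in> carrier G}" using eD Dd by simp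
    then obtain h where h: "h \<in> carrier G" "e = h \<otimes>\<^bsub>G\<^esub> x \<otimes>\<^bsub>G\<^esub> inv\<^bsub>G\<^esub> h" by blast
    have singles: "{d} \<in> I" if "d \<in> D" for d
    proof -
      have "d \<in> {g \<otimes>\<^bsub>G\<^esub> x \<otimes>\<^bsub>G\<^esub> inv\<^bsub>G\<^esub> g | g. g \<in> carrier G}" using that Dd by simp
    then obtain g where g: "g \<in> carrier G" "d = g \<otimes>\<^bsub>G\<^esub> x \<otimes>\<^bsub>G\<^esub> inv\<^bsub>G\<^esub> g" by blast
      have kc: "g \<otimes>\<^bsub>G\<^esub> inv\<^bsub>G\<^esub> h \<in> carrier G" using g h by auto
      have "gact G (g \<otimes>\<^bsub>G\<^esub> inv\<^bsub>G\<^esub> h) {e} = {d}"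
        unfolding gact_def using conj_trans[OF G g(1) h(1) x(1)] h g by simp
      thus ?thesis using assms(3) eI kc unfolding G_invariant_def by metis
    qed
    have all: "F \<in> I" if "F \<in> algA D" for F
    proof -
      have "finite F" "F \<subseteq> D" using that unfolding algA_def by auto
      thus ?thesis
      proof (induction F rule: finite_induct)
        case empty thus ?case using I0 by simp
      next
        case (insert d F)
        have "insert d F = sd {d} F" using insert(2) unfolding sd_def by auto
        thus ?case using Isd[OF singles insert(3)] insert by auto
      qed
    qed
    have "I = algA D" using all IA by auto
    thus False using assms(4) by simp
  qed
qed

end
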